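(* Let $\Gamma\subset SL(2,\mathbb Z)$ be a congruence subgroup, $n_0\in\mathbb Z$, $k\ge0$, $l\in\mathbb Z$, and let $I^{n_0}_{k,l}$ be the (finite) set of four-tuples of partitions with part $n_0$, conformal weight $k$ and fermionic charge $l$. For every $v=\sum a_{-\lambda}\phi_{-\mu}\psi_{-\nu}b_{-\chi}f_{\lambda\mu\nu\chi}\in W_{n_0}(k,l)^\Gamma_0$, each coefficient $f_{\lambda\mu\nu\chi}$ with $(\lambda,\mu,\nu,\chi)\in I^{n_0}_{k,l}$ is a modular form of weight $2n_0$ for $\Gamma$. Consequently the map $\alpha_{n_0}:W_{n_0}(k,l)^\Gamma_0\to M_{2n_0}(\Gamma)^{\oplus|I^{n_0}_{k,l}|}$, $v\mapsto(f_{\lambda\mu\nu\chi})_{(\lambda,\mu,\nu,\chi)\in I^{n_0}_{k,l}}$, is well defined with kernel $W_{n_0+1}(k,l)^\Gamma_0$, so $W_{n_0}(k,l)^\Gamma_0/W_{n_0+1}(k,l)^\Gamma_0$ embeds into $M_{2n_0}(\Gamma)^{\oplus|I^{n_0}_{k,l}|}$.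
   Context: Setup. $\Omega^{ch}(\mathbb H)=(V_1\otimes\bigwedge_1)\otimes_{\mathbb C[b_0]}\mathcal O(\mathbb H)$ with $V_1$ the vacuum Heisenberg module ($[a_m,b_n]=\delta_{m+n,0}$, $a_m\mathbf 1=0$ for $m\ge0$, $b_n\mathbf 1=0$ for $n\ge1$), $\bigwedge_1$ the vacuum Clifford module (odd $\phi_n,\psi_n$, $[\phi_m,\psi_n]=\delta_{m+n,0}$, $\phi_m\mathbf 1=0$ for $m\ge1$, $\psi_n\mathbf 1=0$ for $n\ge0$), $\mathcal O(\mathbb H)$ the holomorphic functions on the upper half plane with $b_0$ acting by multiplication by the coordinate; it is a vertex operator superalgebra (chiral de Rham complex of $\mathbb H$) with Virasoro element $\omega=b_{-1}a_{-1}\mathbf1+\phi_{-1}\psi_{-1}\mathbf1$. Partitions: $\lambda=(\lambda_1\ge\dots\ge\lambda_d\ge1)$ (possibly empty), $p(\lambda)=d$, $|\lambda|=\sum\lambda_i$. A four-tuple $(\lambda,\mu,\nu,\chi)$ has $\lambda,\chi$ partitions and $\mu,\nu$ partitions with distinct parts; $a_{-\lambda}=a_{-\lambda_1}\cdots a_{-\lambda_d}$, similarly $\psi_{-\nu},b_{-\chi}$, and $\phi_{-\mu}=\phi_{-\mu_1+1}\cdots\phi_{-\mu_t+1}$. Every element is uniquely a finite sum $\sum a_{-\lambda}\phi_{-\mu}\psi_{-\nu}b_{-\chi}f_{\lambda\mu\nu\chi}(b)$, $f_{\lambda\mu\nu\chi}\in\mathcal O(\mathbb H)$. The monomial $a_{-\lambda}\phi_{-\mu}\psi_{-\nu}b_{-\chi}f$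 has conformal weight $|\lambda|+|\mu|+|\nu|+|\chi|-p(\mu)$, fermionic charge $p(\mu)-p(\nu)$ and part $-p(\lambda)+p(\mu)-p(\nu)+p(\chi)$. $W_m(k,l)$ is the span of monomials of part $\ge m$, conformal weight $k$ and fermionic charge $l$. Group action: right action $\pi$ of $SL(2,\mathbb R)$ by vertex algebra automorphisms determined for $g=\begin{pmatrix}\alpha&\beta\\\gamma&\delta\end{pmatrix}$ by $\pi(g)a_{-1}\mathbf 1=a_{-1}(\gamma b+\delta)^2+2\gamma(\gamma b+\delta)\phi_0\psi_{-1}$, $\pi(g)b_{-1}\mathbf 1=b_{-1}(\gamma b+\delta)^{-2}$, $\pi(g)\psi_{-1}\mathbf 1=\psi_{-1}(\gamma b+\delta)^{2}$, $\pi(g)\phi_0\mathbf 1=\phi_0(\gamma b+\delta)^{-2}$, $\pi(g)f(b)=f(\frac{\alpha b+\beta}{\gamma b+\delta})$. For a congruence subgroup $\Gamma$, a $\pi(\Gamma)$-fixed $v$ is holomorphic at the cusps if for every $\rho\in SL(2,\mathbb Z)$ each coefficient function of $\pi(\rho)v$ (periodic of some period $N$) has Fourier expansion in $e^{2\pi im\tau/N}$ with no negative $m$. $W_m(k,l)^\Gamma_0$ is the set of $\Gamma$-fixed elements of $W_m(k,l)$ holomorphic at the cusps. $M_k(\Gamma)$ is the space of holomorphic modular forms of weight $k$ for $\Gamma$. *)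

theory Defs
  imports "HOL-Complex_Analysis.Complex_Analysis" "HOL-Library.Multiset" "HOL-Library.Function_Algebras"
begin

section \<open>The state space of the chiral de Rham complex of the upper half plane\<close>

text \<open>A monomial a_{-lambda} phi_{-mu} psi_{-nu} b_{-chi} is encoded as (A,P,S,B):
  A = multiset of the parts of lambda (a_{-n}, n >= 1),
  P = set of the m >= 0 with phi_{-m} present, i.e. P = {mu_i - 1},
  S = set of the parts of nu (psi_{-n}, n >= 1),
  B = multiset of the parts of chi (b_{-n}, n >= 1).
  The canonical ordering of the fermions is the one of the paper:
  phi_{-m} with decreasing m, followed by psi_{-n} with decreasing n.
  An element is a map from monomials to coefficient functions; coefficient
  functions only matter on the upper half plane H.\<close>

type_synonym cfun = "complex \<Rightarrow> complex"
type_synonym mono = "nat multiset \<times> nat set \<times> nat set \<times> nat multiset"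
type_synonym state = "mono \<Rightarrow> cfun"

definition HH :: "complex set" where "HH = {\<tau>. 0 < Im \<tau>}"

definition valid_mono :: "mono \<Rightarrow> bool" where
  "valid_mono m = (case m of (A,P,S,B) \<Rightarrow>
     finite P \<and> finite S \<and> 0 \<notin># A \<and> 0 \<notin># B \<and> 0 \<notin> S)"

definition wt :: "mono \<Rightarrow> nat" where
  "wt m = (case m of (A,P,S,B) \<Rightarrow> sum_mset A + \<Sum>P + \<Sum>S + sum_mset B)"

definition charge :: "mono \<Rightarrow> int" where
  "charge m = (case m of (A,P,S,B) \<Rightarrow> int (card P) - int (card S))"

definition part :: "mono \<Rightarrow> int" where
  "part m = (case m of (A,P,S,B) \<Rightarrow>
     - int (size A) + int (card P) - int (card S) + int (size B))"

definition msize :: "mono \<Rightarrow> nat" where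
  "msize m = (case m of (A,P,S,B) \<Rightarrow> size A + card P + card S + size B)"

definition mon :: "mono \<Rightarrow> cfun \<Rightarrow> state" where
  "mon m f = (\<lambda>m'. if m' = m then f else (\<lambda>_. 0))"

definition smul :: "complex \<Rightarrow> state \<Rightarrow> state" where
  "smul c v = (\<lambda>m \<tau>. c * v m \<tau>)"

definition nz :: "cfun \<Rightarrow> bool" where
  "nz f \<longleftrightarrow> (\<exists>\<tau>\<in>HH. f \<tau> \<noteq> 0)"

definition supp :: "state \<Rightarrow> mono set" where
  "supp v = {m. nz (v m)}"

definition lin :: "(mono \<Rightarrow> cfun \<Rightarrow> state) \<Rightarrow> state \<Rightarrow> state" where
  "lin F v = (\<Sum>m\<in>supp v. F m (v m))"

definition wtmax :: "state \<Rightarrow> nat" where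
  "wtmax w = Max (insert 0 (wt ` supp w))"

text \<open>a_n: creation for n<0, d/db_0 for n=0, d/d(b_{-n}) for n>0\<close>
definition aOp :: "int \<Rightarrow> mono \<Rightarrow> cfun \<Rightarrow> state" where
  "aOp n m f = (case m of (A,P,S,B) \<Rightarrow>
     if n < 0 then mon (A + {#nat (-n)#}, P, S, B) f
     else if n = 0 then mon m (deriv f)
     else mon (A, P, S, B - {#nat n#}) (\<lambda>\<tau>. of_nat (count B (nat n)) * f \<tau>))"

text \<open>b_n: creation for n<0, multiplication by the coordinate for n=0,
  -d/d(a_{-n}) for n>0\<close>
definition bOp :: "int \<Rightarrow> mono \<Rightarrow> cfun \<Rightarrow> state" where
  "bOp n m f = (case m of (A,P,S,B) \<Rightarrow>
     if n < 0 then mon (A, P, S, B + {#nat (-n)#}) f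
     else if n = 0 then mon m (\<lambda>\<tau>. \<tau> * f \<tau>)
     else mon (A - {#nat n#}, P, S, B) (\<lambda>\<tau>. - of_nat (count A (nat n)) * f \<tau>))"

text \<open>phi_n: creation for n<=0, odd derivation d/d(psi_{-n}) for n>0\<close>
definition phiOp :: "int \<Rightarrow> mono \<Rightarrow> cfun \<Rightarrow> state" where
  "phiOp n m f = (case m of (A,P,S,B) \<Rightarrow>
     if n \<le> 0 then
       (let j = nat (-n) in if j \<in> P then (\<lambda>_ _. 0)
        else mon (A, insert j P, S, B) (\<lambda>\<tau>. (-1) ^ card {p\<in>P. j < p} * f \<tau>))
     else
       (let j = nat n in if j \<in> S then
          mon (A, P, S - {j}, B) (\<lambda>\<tau>. (-1) ^ (card P + card {s\<in>S. j < s}) * f \<tau>)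
        else (\<lambda>_ _. 0)))"

text \<open>psi_n: creation for n<0, odd derivation d/d(phi_{-n}) for n>=0\<close>
definition psiOp :: "int \<Rightarrow> mono \<Rightarrow> cfun \<Rightarrow> state" where
  "psiOp n m f = (case m of (A,P,S,B) \<Rightarrow>
     if n < 0 then
       (let j = nat (-n) in if j \<in> S then (\<lambda>_ _. 0)
        else mon (A, P, insert j S, B) (\<lambda>\<tau>. (-1) ^ (card P + card {s\<in>S. j < s}) * f \<tau>))
     else
       (let j = nat n in if j \<in> P then
          mon (A, P - {j}, S, B) (\<lambda>\<tau>. (-1) ^ card {p\<in>P. j < p} * f \<tau>)
        else (\<lambda>_ _. 0)))"

text \<open>The n-th product operators u_(k) of the generating states
  a = a_{-1}1 (field sum a_n z^{-n-1}), b = b_0 1 (field sum b_n z^{-n}),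
  phi = phi_0 1 (field sum phi_n z^{-n}), psi = psi_{-1} 1 (field sum psi_n z^{-n-1}).\<close>
definition aM :: "int \<Rightarrow> state \<Rightarrow> state" where "aM k = lin (aOp k)"
definition bM :: "int \<Rightarrow> state \<Rightarrow> state" where "bM k = lin (bOp (k + 1))"
definition phiM :: "int \<Rightarrow> state \<Rightarrow> state" where "phiM k = lin (phiOp (k + 1))"
definition psiM :: "int \<Rightarrow> state \<Rightarrow> state" where "psiM k = lin (psiOp k)"

text \<open>Modes of the field f(b(z)) = sum_K f^(K)(b_0)/K! (b(z)-b_0)^K of the state f(b_0)1.\<close>
definition msum :: "int \<Rightarrow> nat multiset set" where
  "msum s = {M. 0 \<notin># M \<and> int (sum_mset M) = s}"

definition Fmono :: "cfun \<Rightarrow> int \<Rightarrow> mono \<Rightarrow> cfun \<Rightarrow> state" where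
  "Fmono f k m h = (case m of (A,P,S,B) \<Rightarrow>
     \<Sum>Q\<in>{Q. Q \<subseteq># A}. \<Sum>M\<in>msum (int (sum_mset Q) - k - 1).
       mon (A - Q, P, S, B + M)
         (\<lambda>\<tau>. ((-1) ^ size Q * (\<Prod>p\<in>set_mset Q. of_nat (count A p choose count Q p))
                / (\<Prod>n\<in>set_mset M. fact (count M n)))
               * (deriv ^^ (size Q + size M)) f \<tau> * h \<tau>))"

definition FM :: "cfun \<Rightarrow> int \<Rightarrow> state \<Rightarrow> state" where
  "FM f k = lin (Fmono f k)"

text \<open>Y(u)_(k) w for a monomial state u, computed by the Borcherds identity
  (x_(-j-1) u')_(k) = sum_i C(j+i,i) [x_(-j-1-i) u'_(k+i) + (-1)^j eps u'_(k-j-1-i) x_(i)];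
  the sums over i are finite, and are truncated at a bound beyond which all terms vanish
  by the weight grading. The first argument is fuel (the number of creation operators).\<close>
primrec Yf :: "nat \<Rightarrow> mono \<Rightarrow> cfun \<Rightarrow> int \<Rightarrow> state \<Rightarrow> state" where
  "Yf 0 m f k w = FM f k w"
| "Yf (Suc r) m f k w = (case m of (A,P,S,B) \<Rightarrow>
    let N = wt m + wtmax w + nat \<bar>k\<bar> + 1 in
    if A \<noteq> {#} then
      (let n = Max (set_mset A); u = (A - {#n#}, P, S, B) in
       \<Sum>i\<le>N. smul (of_nat ((n - 1 + i) choose i))
          (aM (- int n - int i) (Yf r u f (k + int i) w)
           + smul ((-1) ^ (n - 1)) (Yf r u f (k - int n - int i) (aM (int i) w))))
    else if B \<noteq> {#} then
      (let n = Max (set_mset B); u = (A, P, S, B - {#n#}) in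
       \<Sum>i\<le>N. smul (of_nat ((n + i) choose i))
          (bM (- int n - 1 - int i) (Yf r u f (k + int i) w)
           + smul ((-1) ^ n) (Yf r u f (k - int n - 1 - int i) (bM (int i) w))))
    else if P \<noteq> {} then
      (let n = Max P; u = (A, P - {n}, S, B) in
       \<Sum>i\<le>N. smul (of_nat ((n + i) choose i))
          (phiM (- int n - 1 - int i) (Yf r u f (k + int i) w)
           + smul ((-1) ^ (n + card (P - {n}) + card S))
               (Yf r u f (k - int n - 1 - int i) (phiM (int i) w))))
    else if S \<noteq> {} then
      (let n = Max S; u = (A, P, S - {n}, B) in
       \<Sum>i\<le>N. smul (of_nat ((n - 1 + i) choose i))
          (psiM (- int n - int i) (Yf r u f (k + int i) w)
           + smul ((-1) ^ (n - 1 + card (S - {n})))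
               (Yf r u f (k - int n - int i) (psiM (int i) w))))
    else FM f k w)"

definition YM :: "state \<Rightarrow> int \<Rightarrow> state \<Rightarrow> state" where
  "YM u k w = (\<Sum>m\<in>supp u. Yf (msize m) m (u m) k w)"

section \<open>The SL(2,R) action\<close>

type_synonym real4 = "real \<times> real \<times> real \<times> real"
type_synonym int4 = "int \<times> int \<times> int \<times> int"

definition mob :: "real4 \<Rightarrow> complex \<Rightarrow> complex" where
  "mob g \<tau> = (case g of (\<alpha>,\<beta>,\<gamma>,\<delta>) \<Rightarrow>
     (of_real \<alpha> * \<tau> + of_real \<beta>) / (of_real \<gamma> * \<tau> + of_real \<delta>))"

definition jf :: "real4 \<Rightarrow> complex \<Rightarrow> complex" where
  "jf g \<tau> = (case g of (\<alpha>,\<beta>,\<gamma>,\<delta>) \<Rightarrow> of_real \<gamma> * \<tau> + of_real \<delta>)"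

definition emono :: mono where "emono = ({#}, {}, {}, {#})"

text \<open>images of the generating states a_{-1}1, b_0 1, phi_0 1, psi_{-1} 1\<close>
definition piA :: "real4 \<Rightarrow> state" where
  "piA g = mon ({#1#}, {}, {}, {#}) (\<lambda>\<tau>. (jf g \<tau>)^2)
         + mon ({#}, {0}, {1}, {#}) (\<lambda>\<tau>. 2 * of_real (fst (snd (snd g))) * jf g \<tau>)"
definition piB :: "real4 \<Rightarrow> state" where
  "piB g = mon emono (mob g)"
definition piPhi :: "real4 \<Rightarrow> state" where
  "piPhi g = mon ({#}, {0}, {}, {#}) (\<lambda>\<tau>. 1 / (jf g \<tau>)^2)"
definition piPsi :: "real4 \<Rightarrow> state" where
  "piPsi g = mon ({#}, {}, {1}, {#}) (\<lambda>\<tau>. (jf g \<tau>)^2)"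

text \<open>pi(g) is the vertex algebra automorphism: pi(x_(n) u) = pi(x)_(n) pi(u)\<close>
primrec pif :: "nat \<Rightarrow> real4 \<Rightarrow> mono \<Rightarrow> cfun \<Rightarrow> state" where
  "pif 0 g m f = mon emono (\<lambda>\<tau>. f (mob g \<tau>))"
| "pif (Suc r) g m f = (case m of (A,P,S,B) \<Rightarrow>
    if A \<noteq> {#} then (let n = Max (set_mset A) in
      YM (piA g) (- int n) (pif r g (A - {#n#}, P, S, B) f))
    else if B \<noteq> {#} then (let n = Max (set_mset B) in
      YM (piB g) (- int n - 1) (pif r g (A, P, S, B - {#n#}) f))
    else if P \<noteq> {} then (let n = Max P in
      YM (piPhi g) (- int n - 1) (pif r g (A, P - {n}, S, B) f))
    else if S \<noteq> {} then (let n = Max S in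
      YM (piPsi g) (- int n) (pif r g (A, P, S - {n}, B) f))
    else mon emono (\<lambda>\<tau>. f (mob g \<tau>)))"

definition piact :: "real4 \<Rightarrow> state \<Rightarrow> state" where
  "piact g = lin (\<lambda>m f. pif (msize m) g m f)"

section \<open>Congruence subgroups, modular forms, cusps\<close>

definition rm :: "int4 \<Rightarrow> real4" where
  "rm g = (case g of (a,b,c,d) \<Rightarrow> (of_int a, of_int b, of_int c, of_int d))"

definition SL2Z :: "int4 set" where
  "SL2Z = {(a,b,c,d). a * d - b * c = 1}"

definition mmul :: "int4 \<Rightarrow> int4 \<Rightarrow> int4" where
  "mmul g h = (case g of (a,b,c,d) \<Rightarrow> case h of (a',b',c',d') \<Rightarrow>
     (a*a' + b*c', a*b' + b*d', c*a' + d*c', c*b' + d*d'))"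

definition minv :: "int4 \<Rightarrow> int4" where
  "minv g = (case g of (a,b,c,d) \<Rightarrow> (d, -b, -c, a))"

definition principal :: "nat \<Rightarrow> int4 set" where
  "principal N = {(a,b,c,d) \<in> SL2Z. (a - 1) mod int N = 0 \<and> b mod int N = 0
                    \<and> c mod int N = 0 \<and> (d - 1) mod int N = 0}"

definition congruence_subgroup :: "int4 set \<Rightarrow> bool" where
  "congruence_subgroup \<Gamma> \<longleftrightarrow> \<Gamma> \<subseteq> SL2Z \<and> (1,0,0,1) \<in> \<Gamma>
     \<and> (\<forall>g\<in>\<Gamma>. \<forall>h\<in>\<Gamma>. mmul g h \<in> \<Gamma>) \<and> (\<forall>g\<in>\<Gamma>. minv g \<in> \<Gamma>)
     \<and> (\<exists>N>0. principal N \<subseteq> \<Gamma>)"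

definition hol_cusp :: "cfun \<Rightarrow> bool" where
  "hol_cusp h \<longleftrightarrow> (\<exists>N::nat. N > 0 \<and> (\<forall>\<tau>\<in>HH. h (\<tau> + of_nat N) = h \<tau>) \<and>
     (\<exists>c::nat \<Rightarrow> complex. \<forall>\<tau>\<in>HH.
        (\<lambda>m. c m * exp (2 * of_real pi * \<i> * of_nat m * \<tau> / of_nat N)) sums h \<tau>))"

definition modular_form :: "int \<Rightarrow> int4 set \<Rightarrow> cfun \<Rightarrow> bool" where
  "modular_form k \<Gamma> f \<longleftrightarrow> f holomorphic_on HH
     \<and> (\<forall>g\<in>\<Gamma>. \<forall>\<tau>\<in>HH. f (mob (rm g) \<tau>) = (jf (rm g) \<tau>) powi k * f \<tau>)
     \<and> (\<forall>\<rho>\<in>SL2Z. hol_cusp (\<lambda>\<tau>. (jf (rm \<rho>) \<tau>) powi (- k) * f (mob (rm \<rho>) \<tau>)))"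

definition W :: "int \<Rightarrow> nat \<Rightarrow> int \<Rightarrow> state set" where
  "W m0 k l = {v. finite (supp v) \<and> (\<forall>m. v m holomorphic_on HH)
     \<and> (\<forall>m\<in>supp v. valid_mono m \<and> part m \<ge> m0 \<and> wt m = k \<and> charge m = l)}"

definition Wfix0 :: "int4 set \<Rightarrow> int \<Rightarrow> nat \<Rightarrow> int \<Rightarrow> state set" where
  "Wfix0 \<Gamma> m0 k l = {v \<in> W m0 k l.
     (\<forall>g\<in>\<Gamma>. \<forall>m. \<forall>\<tau>\<in>HH. piact (rm g) v m \<tau> = v m \<tau>)
     \<and> (\<forall>\<rho>\<in>SL2Z. \<forall>m. hol_cusp (piact (rm \<rho>) v m))}"

definition Iset :: "int \<Rightarrow> nat \<Rightarrow> int \<Rightarrow> mono set" where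
  "Iset n0 k l = {m. valid_mono m \<and> part m = n0 \<and> wt m = k \<and> charge m = l}"

end

theory Submission
  imports Defs
begin

lemma sum_app: "(\<Sum>x\<in>X. (f x :: state)) m \<tau> = (\<Sum>x\<in>X. f x m \<tau>)"
  by (induction X rule: infinite_finite_induct) auto

definition fmono :: "mono \<Rightarrow> bool" where
  "fmono m = (case m of (A,P,S,B) \<Rightarrow> finite P \<and> finite S)"

definition ge :: "int \<Rightarrow> state \<Rightarrow> bool" where
  "ge p w \<longleftrightarrow> finite (supp w) \<and> (\<forall>m\<in>supp w. p \<le> part m \<and> fmono m)"

lemma supp_zero[simp]: "supp (\<lambda>_ _. 0) = {}" "supp 0 = {}"
  by (auto simp: supp_def nz_def)

lemma supp_add: "supp (v + w) \<subseteq> supp v \<union> supp w"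
  by (auto simp: supp_def nz_def)

lemma supp_sum: "supp (\<Sum>x\<in>X. f x) \<subseteq> (\<Union>x\<in>X. supp (f x))"
proof (induction X rule: infinite_finite_induct)
  case (insert x F)
  have "supp (sum f (insert x F)) = supp (f x + sum f F)" using insert by simp
  then show ?case using supp_add[of "f x" "sum f F"] insert by blast
qed auto

lemma supp_mon: "supp (mon m f) \<subseteq> {m}"
  by (auto simp: supp_def nz_def mon_def)

lemma supp_smul: "supp (smul c v) \<subseteq> supp v"
  by (auto simp: supp_def nz_def smul_def)

lemma ge_zero[simp]: "ge p (\<lambda>_ _. 0)" "ge p 0" by (auto simp: ge_def)

lemma ge_add: "ge p v \<Longrightarrow> ge p w \<Longrightarrow> ge p (v + w)"
  unfolding ge_def using supp_add[of v w] by (meson finite_Un rev_finite_subset subsetD Un_iff)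

lemma ge_sum: "(\<And>x. x \<in> X \<Longrightarrow> ge p (f x)) \<Longrightarrow> ge p (\<Sum>x\<in>X. f x)"
  by (induction X rule: infinite_finite_induct) (auto intro: ge_add)

lemma ge_smul: "ge p v \<Longrightarrow> ge p (smul c v)"
  unfolding ge_def using supp_smul[of c v] by (meson rev_finite_subset subsetD)

lemma ge_mono: "ge p v \<Longrightarrow> q \<le> p \<Longrightarrow> ge q v"
  unfolding ge_def by auto

lemma ge_mon: "q \<le> part m \<Longrightarrow> fmono m \<Longrightarrow> ge q (mon m f)"
  unfolding ge_def using supp_mon[of m f] by (auto intro: rev_finite_subset)

lemma ge_lin:
  assumes H: "\<And>m f. fmono m \<Longrightarrow> ge (part m + d) (F m f)" and w: "ge p w"
  shows "ge (p + d) (lin F w)"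
  unfolding lin_def
proof (rule ge_sum)
  fix m assume "m \<in> supp w"
  then have "fmono m" "p \<le> part m" using w by (auto simp: ge_def)
  then show "ge (p + d) (F m (w m))" using H[of m "w m"] ge_mono by fastforce
qed

definition LD :: "int \<Rightarrow> mono \<Rightarrow> cfun \<Rightarrow> state \<Rightarrow> bool" where
  "LD p m h w \<longleftrightarrow> ge p w \<and> part m = p \<and> fmono m \<and> (\<forall>m'\<in>supp w. m' \<noteq> m \<longrightarrow> p < part m')
     \<and> (\<forall>\<tau>\<in>HH. w m \<tau> = h \<tau>)"

lemma not_supp: "m \<notin> supp w \<Longrightarrow> \<tau> \<in> HH \<Longrightarrow> w m \<tau> = 0"
  by (auto simp: supp_def nz_def)

lemma LD_add:
  assumes "LD p m h w" "ge (p+1) w'" shows "LD p m h (w + w')"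
proof -
  have "m \<notin> supp w'" using assms by (auto simp: ge_def LD_def)
  then have z: "\<forall>\<tau>\<in>HH. w' m \<tau> = 0" using not_supp by blast
  have "ge p w'" using assms(2) ge_mono by force
  then have "ge p (w + w')" using assms(1) ge_add LD_def by blast
  moreover have "\<forall>m'\<in>supp (w+w'). m' \<noteq> m \<longrightarrow> p < part m'"
  proof
    fix m' assume "m' \<in> supp (w+w')"
    then have "m' \<in> supp w \<or> m' \<in> supp w'" using supp_add[of w w'] by blast
    then show "m' \<noteq> m \<longrightarrow> p < part m'" using assms unfolding LD_def ge_def by fastforce
  qed
  ultimately show ?thesis using assms(1) z by (auto simp: LD_def)
qed

lemma LD_zero_lead:
  assumes "ge (p+1) w" "part m = p" "fmono m" "\<forall>\<tau>\<in>HH. h \<tau> = 0" shows "LD p m h w"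
proof -
  have "m \<notin> supp w" using assms by (auto simp: ge_def)
  moreover have "ge p w" using ge_mono[OF assms(1)] by simp
  moreover have "\<forall>m'\<in>supp w. m' \<noteq> m \<longrightarrow> p < part m'" using assms(1) by (auto simp: ge_def)
  moreover have "\<forall>\<tau>\<in>HH. w m \<tau> = h \<tau>" using \<open>m \<notin> supp w\<close> assms(4) not_supp by auto
  ultimately show ?thesis using assms unfolding LD_def by blast
qed

lemma LD_cong: "LD p m h w \<Longrightarrow> (\<forall>\<tau>\<in>HH. h \<tau> = h' \<tau>) \<Longrightarrow> LD p m h' w"
  by (auto simp: LD_def)

lemma LD_mon: "part m = p \<Longrightarrow> fmono m \<Longrightarrow> LD p m h (mon m h)"
  using supp_mon[of m h] ge_mon[of p m h] by (auto simp: LD_def mon_def)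

lemma smul_one[simp]: "smul 1 v = v" by (simp add: smul_def)

lemma LinLD:
  assumes H: "\<And>m f. fmono m \<Longrightarrow> ge (part m + d) (F m f)"
    and L: "\<And>f. LD (p+d) m2 (\<lambda>\<tau>. G \<tau> * f \<tau>) (F m f)"
    and w: "LD p m h w"
  shows "LD (p+d) m2 (\<lambda>\<tau>. G \<tau> * h \<tau>) (lin F w)"
proof -
  have fin: "finite (supp w)" using w by (simp add: LD_def ge_def)
  have rest: "ge (p+d+1) (\<Sum>m'\<in>supp w - {m}. F m' (w m'))"
  proof (rule ge_sum)
    fix m' assume "m' \<in> supp w - {m}"
    then have "fmono m'" "p + 1 \<le> part m'" using w by (auto simp: LD_def ge_def)
    then show "ge (p + d + 1) (F m' (w m'))" using H[of m' "w m'"] ge_mono by fastforce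
  qed
  show ?thesis
  proof (cases "m \<in> supp w")
    case True
    then have "lin F w = F m (w m) + (\<Sum>m'\<in>supp w - {m}. F m' (w m'))"
      unfolding lin_def using fin by (simp add: sum.remove)
    moreover have "LD (p+d) m2 (\<lambda>\<tau>. G \<tau> * h \<tau>) (F m (w m))"
    proof (rule LD_cong)
      show "LD (p+d) m2 (\<lambda>\<tau>. G \<tau> * w m \<tau>) (F m (w m))" by (rule L)
      show "\<forall>\<tau>\<in>HH. G \<tau> * w m \<tau> = G \<tau> * h \<tau>" using w by (simp add: LD_def)
    qed
    ultimately show ?thesis using LD_add rest by simp
  next
    case False
    then have "lin F w = (\<Sum>m'\<in>supp w - {m}. F m' (w m'))" unfolding lin_def by simp
    moreover have "\<forall>\<tau>\<in>HH. G \<tau> * h \<tau> = 0" using not_supp[OF False] w by (simp add: LD_def)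
    moreover have "part m2 = p + d" "fmono m2" using L[of h] by (auto simp: LD_def)
    ultimately show ?thesis using rest LD_zero_lead[of "p+d" _ m2 "\<lambda>\<tau>. G \<tau> * h \<tau>"] by simp
  qed
qed

lemma part_eq: "part (A,P,S,B) = - int (size A) + int (card P) - int (card S) + int (size B)"
  by (simp add: part_def)

lemma fmono_eq[simp]: "fmono (A,P,S,B) = (finite P \<and> finite S)" by (simp add: fmono_def)

lemma size_diff1: "int (size (B - {#x#})) \<ge> int (size B) - 1"
  by (cases "x \<in># B") (auto simp: size_Diff_singleton)

lemma size_diff1': "int (size (B - {#x#})) \<le> int (size B)"
  by (cases "x \<in># B") (auto simp: size_Diff_singleton)

lemma card_diff_int: "finite S \<Longrightarrow> x \<in> S \<Longrightarrow> int (card (S - {x})) = int (card S) - 1"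
  by (metis card_Diff_singleton card_gt_0_iff empty_iff of_nat_1 of_nat_diff One_nat_def Suc_leI)

lemma ge_aOp: "fmono m \<Longrightarrow> ge (part m - 1) (aOp n m f)"
proof (cases m)
  case (fields A P S B)
  assume "fmono m"
  then show ?thesis using fields size_diff1[of B "nat n"]
    by (auto simp: aOp_def part_eq intro!: ge_mon)
qed

lemma ge_phiOp: "fmono m \<Longrightarrow> ge (part m + 1) (phiOp n m f)"
proof (cases m)
  case (fields A P S B)
  assume "fmono m"
  then show ?thesis using fields card_gt_0_iff[of S]
    by (auto simp: phiOp_def part_eq Let_def card_diff_int simp del: card_Diff_singleton card_Diff_singleton_if intro!: ge_mon)
qed

lemma ge_psiOp: "fmono m \<Longrightarrow> ge (part m - 1) (psiOp n m f)"
proof (cases m)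
  case (fields A P S B)
  assume "fmono m"
  then show ?thesis using fields
    by (auto simp: psiOp_def part_eq Let_def card_diff_int simp del: card_Diff_singleton card_Diff_singleton_if intro!: ge_mon)
qed

lemma ge_aM: "ge p w \<Longrightarrow> ge (p - 1) (aM k w)"
  unfolding aM_def using ge_lin[of "-1" "aOp k" p w] ge_aOp by simp
lemma ge_phiM: "ge p w \<Longrightarrow> ge (p + 1) (phiM k w)"
  unfolding phiM_def using ge_lin[of "1" "phiOp (k+1)" p w] ge_phiOp by simp
lemma ge_psiM: "ge p w \<Longrightarrow> ge (p - 1) (psiM k w)"
  unfolding psiM_def using ge_lin[of "-1" "psiOp k" p w] ge_psiOp by simp

lemma part_FM_mono:
  assumes "Q \<subseteq># A"
  shows "part (A - Q, P, S, B + M) = part (A,P,S,B) + int (size Q) + int (size M)"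
proof -
  have "size Q \<le> size A" using assms size_mset_mono by blast
  then show ?thesis using assms by (simp add: part_eq size_Diff_submset of_nat_diff)
qed

lemma ge_Fmono: "fmono m \<Longrightarrow> ge (part m + (if k = -1 then 0 else 1)) (Fmono c k m h)"
proof (cases m)
  case (fields A P S B)
  assume fm: "fmono m"
  show ?thesis unfolding fields Fmono_def prod.case
  proof (intro ge_sum ge_mon)
    fix Q M assume Q: "Q \<in> {Q. Q \<subseteq># A}" and M: "M \<in> msum (int (sum_mset Q) - k - 1)"
    show "fmono (A - Q, P, S, B + M)" using fm fields by simp
    have e: "part (A - Q, P, S, B + M) = part (A,P,S,B) + int (size Q) + int (size M)"
      using Q part_FM_mono by blast
    have "k \<noteq> -1 \<Longrightarrow> Q \<noteq> {#} \<or> M \<noteq> {#}" using M by (auto simp: msum_def)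
    then have "k \<noteq> -1 \<Longrightarrow> 1 \<le> size Q + size M" by (auto simp: Suc_le_eq nonempty_has_size)
    then show "part (A, P, S, B) + (if k = - 1 then 0 else 1) \<le> part (A - Q, P, S, B + M)"
      unfolding e by auto
  qed
qed

lemma ge_FM: "ge p w \<Longrightarrow> ge p (FM c k w)"
  unfolding FM_def using ge_lin[of 0 "Fmono c k" p w] ge_Fmono[of _ k c] ge_mono
  by (smt (verit, best))

lemma ge_FM1: "k \<noteq> -1 \<Longrightarrow> ge p w \<Longrightarrow> ge (p+1) (FM c k w)"
  unfolding FM_def using ge_lin[of 1 "Fmono c k" p w] ge_Fmono[of _ k c] by simp

lemma fin_submsets: "finite {Q. Q \<subseteq># (A :: 'a multiset)}"
proof (rule finite_subset)
  show "{Q. Q \<subseteq># A} \<subseteq> mset ` {ys. set ys \<subseteq> set_mset A \<and> length ys \<le> size A}"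
  proof
    fix Q assume "Q \<in> {Q. Q \<subseteq># A}"
    then have Q: "Q \<subseteq># A" by simp
    obtain ys where ys: "mset ys = Q" using ex_mset by blast
    have "set ys \<subseteq> set_mset A" using ys Q by (metis set_mset_mono set_mset_mset)
    moreover have "length ys \<le> size A" using ys Q by (metis size_mset size_mset_mono)
    ultimately show "Q \<in> mset ` {ys. set ys \<subseteq> set_mset A \<and> length ys \<le> size A}" using ys by blast
  qed
  show "finite (mset ` {ys. set ys \<subseteq> set_mset A \<and> length ys \<le> size A})"
    by (intro finite_imageI finite_lists_length_le) simp
qed

lemma size_le_sum: "0 \<notin># (M :: nat multiset) \<Longrightarrow> size M \<le> sum_mset M"
  by (induction M) auto

lemma elem_le_sum: "x \<in># (M :: nat multiset) \<Longrightarrow> x \<le> sum_mset M"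
  by (induction M) auto

lemma fin_msum: "finite (msum s)"
proof (rule finite_subset)
  show "msum s \<subseteq> mset ` {ys. set ys \<subseteq> {0..nat s} \<and> length ys \<le> nat s}"
  proof
    fix M assume "M \<in> msum s"
    then have M: "0 \<notin># M" "int (sum_mset M) = s" by (auto simp: msum_def)
    obtain ys where ys: "mset ys = M" using ex_mset by blast
    have sm: "sum_mset M = nat s" using M(2) by linarith
    have "set ys \<subseteq> {0..nat s}"
    proof
      fix x assume "x \<in> set ys"
      then have "x \<in># M" using ys by auto
      then show "x \<in> {0..nat s}" using elem_le_sum[of x M] sm by simp
    qed
    moreover have "length ys \<le> nat s" using size_le_sum[OF M(1)] sm ys by (metis size_mset)
    ultimately show "M \<in> mset ` {ys. set ys \<subseteq> {0..nat s} \<and> length ys \<le> nat s}" using ys by blast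
  qed
  show "finite (mset ` {ys. set ys \<subseteq> {0..nat s} \<and> length ys \<le> nat s})"
    by (intro finite_imageI finite_lists_length_le) simp
qed

lemma msum0: "msum 0 = {{#}}"
proof -
  have "M = {#}" if "0 \<notin># M" "int (sum_mset M) = 0" for M :: "nat multiset"
  proof -
    have "sum_mset M = 0" using that(2) by linarith
    then show ?thesis using that(1) sum_mset_0_iff by (metis multiset_nonemptyE)
  qed
  then show ?thesis by (auto simp: msum_def)
qed

lemma LD_Fmono_lead:
  assumes fm: "fmono m"
  shows "LD (part m) m (\<lambda>\<tau>. c \<tau> * f \<tau>) (Fmono c (-1) m f)"
proof (cases m)
  case (fields A P S B)
  let ?T = "\<lambda>Q. \<Sum>M\<in>msum (int (sum_mset Q) - (-1) - 1).
       mon (A - Q, P, S, B + M)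
         (\<lambda>\<tau>. ((-1) ^ size Q * (\<Prod>p\<in>set_mset Q. of_nat (count A p choose count Q p))
                / (\<Prod>n\<in>set_mset M. fact (count M n)))
               * (deriv ^^ (size Q + size M)) c \<tau> * f \<tau>)"
  have "Fmono c (-1) m f = (\<Sum>Q\<in>{Q. Q \<subseteq># A}. ?T Q)" unfolding fields Fmono_def by simp
  also have "\<dots> = ?T {#} + (\<Sum>Q\<in>{Q. Q \<subseteq># A} - {{#}}. ?T Q)"
    by (rule sum.remove) (use fin_submsets[of A] in auto)
  finally have e: "Fmono c (-1) m f = ?T {#} + (\<Sum>Q\<in>{Q. Q \<subseteq># A} - {{#}}. ?T Q)" .
  have t0: "?T {#} = mon m (\<lambda>\<tau>. c \<tau> * f \<tau>)" unfolding fields by (simp add: msum0)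
  have r: "ge (part m + 1) (\<Sum>Q\<in>{Q. Q \<subseteq># A} - {{#}}. ?T Q)"
  proof (intro ge_sum ge_mon)
    fix Q M assume Q: "Q \<in> {Q. Q \<subseteq># A} - {{#}}" and M: "M \<in> msum (int (sum_mset Q) - (-1) - 1)"
    show "fmono (A - Q, P, S, B + M)" using fm fields by simp
    have e: "part (A - Q, P, S, B + M) = part (A,P,S,B) + int (size Q) + int (size M)"
      using Q part_FM_mono by blast
    have "1 \<le> size Q" using Q by (auto simp: Suc_le_eq nonempty_has_size)
    then show "part m + 1 \<le> part (A - Q, P, S, B + M)" unfolding e fields by auto
  qed
  show ?thesis unfolding e t0 by (rule LD_add[OF LD_mon r]) (use fm in auto)
qed

lemma LD_FM_lead:
  assumes w: "LD p m h w" shows "LD p m (\<lambda>\<tau>. c \<tau> * h \<tau>) (FM c (-1) w)"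
proof -
  have pm: "part m = p" "fmono m" using w by (auto simp: LD_def)
  have H: "\<And>m f. fmono m \<Longrightarrow> ge (part m + 0) (Fmono c (-1) m f)"
    using ge_Fmono[of _ "-1" c] by simp
  have L: "\<And>f. LD (p + 0) m (\<lambda>\<tau>. c \<tau> * f \<tau>) (Fmono c (-1) m f)"
    using LD_Fmono_lead[OF pm(2)] pm(1) by simp
  show ?thesis using LinLD[of 0 "Fmono c (-1)" p m c, OF H L w] unfolding FM_def by simp
qed

lemma LD_aM:
  assumes n: "1 \<le> n" and w: "LD p (A,P,S,B) h w"
  shows "LD (p-1) (A + {#n#},P,S,B) h (aM (- int n) w)"
proof -
  have pm: "part (A,P,S,B) = p" "fmono (A,P,S,B)" using w by (auto simp: LD_def)
  have H: "\<And>m f. fmono m \<Longrightarrow> ge (part m + (-1)) (aOp (- int n) m f)"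
    using ge_aOp by simp
  have L: "LD (p + (-1)) (A + {#n#},P,S,B) (\<lambda>\<tau>. 1 * f \<tau>) (aOp (- int n) (A,P,S,B) f)" for f
  proof -
    have "aOp (- int n) (A,P,S,B) f = mon (A + {#n#},P,S,B) f" using n by (simp add: aOp_def)
    moreover have "part (A + {#n#},P,S,B) = p + (-1)" using pm by (simp add: part_eq)
    ultimately show ?thesis using LD_mon pm by simp
  qed
  show ?thesis using LinLD[OF H L w]
    unfolding aM_def by simp
qed

lemma LD_phiM:
  assumes q: "q \<notin> P" and w: "LD p (A,P,S,B) h w"
  shows "LD (p+1) (A, insert q P,S,B) (\<lambda>\<tau>. (-1) ^ card {x\<in>P. q < x} * h \<tau>) (phiM (- int q - 1) w)"
proof -
  have pm: "part (A,P,S,B) = p" "fmono (A,P,S,B)" using w by (auto simp: LD_def)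
  have H: "\<And>m f. fmono m \<Longrightarrow> ge (part m + 1) (phiOp (- int q) m f)"
    using ge_phiOp by simp
  have L: "LD (p + 1) (A, insert q P,S,B) (\<lambda>\<tau>. (-1) ^ card {x\<in>P. q < x} * f \<tau>) (phiOp (- int q) (A,P,S,B) f)" for f
  proof -
    have "phiOp (- int q) (A,P,S,B) f = mon (A, insert q P,S,B) (\<lambda>\<tau>. (-1) ^ card {x\<in>P. q < x} * f \<tau>)"
      using q by (simp add: phiOp_def Let_def)
    moreover have "part (A, insert q P,S,B) = p + 1" using pm q by (simp add: part_eq)
    ultimately show ?thesis using LD_mon pm by simp
  qed
  show ?thesis using LinLD[OF H L w] unfolding phiM_def by simp
qed

lemma LD_psiM:
  assumes s: "s \<notin> S" "1 \<le> s" and w: "LD p (A,P,S,B) h w"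
  shows "LD (p-1) (A, P, insert s S,B) (\<lambda>\<tau>. (-1) ^ (card P + card {x\<in>S. s < x}) * h \<tau>) (psiM (- int s) w)"
proof -
  have pm: "part (A,P,S,B) = p" "fmono (A,P,S,B)" using w by (auto simp: LD_def)
  have H: "\<And>m f. fmono m \<Longrightarrow> ge (part m + (-1)) (psiOp (- int s) m f)"
    using ge_psiOp by simp
  have L: "LD (p + (-1)) (A, P, insert s S,B) (\<lambda>\<tau>. (-1) ^ (card P + card {x\<in>S. s < x}) * f \<tau>) (psiOp (- int s) (A,P,S,B) f)" for f
  proof -
    have "psiOp (- int s) (A,P,S,B) f = mon (A, P, insert s S,B) (\<lambda>\<tau>. (-1) ^ (card P + card {x\<in>S. s < x}) * f \<tau>)"
      using s by (simp add: psiOp_def Let_def)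
    moreover have "part (A, P, insert s S,B) = p + (-1)" using pm s by (simp add: part_eq)
    ultimately show ?thesis using LD_mon pm by simp
  qed
  show ?thesis using LinLD[OF H L w] unfolding psiM_def by simp
qed

lemma msum_n_rest:
  assumes "1 \<le> n" "M \<in> msum (int n)" "M \<noteq> {#n#}" shows "2 \<le> size M"
proof (rule ccontr)
  assume "\<not> 2 \<le> size M"
  then have "size M = 0 \<or> size M = 1" by linarith
  moreover have "M \<noteq> {#}" using assms by (auto simp: msum_def)
  ultimately obtain x where "M = {#x#}" using size_1_singleton_mset by auto
  then show False using assms by (auto simp: msum_def)
qed

lemma LD_Fmono_b:
  assumes fm: "fmono (A,P,S,B)" and n: "1 \<le> n"
  shows "LD (part (A,P,S,B) + 1) (A,P,S,B + {#n#}) (\<lambda>\<tau>. deriv c \<tau> * f \<tau>) (Fmono c (- int n - 1) (A,P,S,B) f)"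
proof -
  let ?m = "(A,P,S,B)"
  let ?t = "\<lambda>Q M. mon (A - Q, P, S, B + M)
         (\<lambda>\<tau>. ((-1) ^ size Q * (\<Prod>p\<in>set_mset Q. of_nat (count A p choose count Q p))
                / (\<Prod>n\<in>set_mset M. fact (count M n)))
               * (deriv ^^ (size Q + size M)) c \<tau> * f \<tau>)"
  let ?T = "\<lambda>Q. \<Sum>M\<in>msum (int (sum_mset Q) - (- int n - 1) - 1). ?t Q M"
  have bnd: "ge (part ?m + 2) (?t Q M)" if "Q \<subseteq># A" "2 \<le> size Q + size M" for Q M
  proof (rule ge_mon)
    show "fmono (A - Q, P, S, B + M)" using fm by simp
    show "part ?m + 2 \<le> part (A - Q, P, S, B + M)" using part_FM_mono[OF that(1)] that(2) by simp
  qed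
  have "Fmono c (- int n - 1) ?m f = (\<Sum>Q\<in>{Q. Q \<subseteq># A}. ?T Q)" unfolding Fmono_def by simp
  also have "\<dots> = ?T {#} + (\<Sum>Q\<in>{Q. Q \<subseteq># A} - {{#}}. ?T Q)"
    by (rule sum.remove) (use fin_submsets[of A] in auto)
  finally have e1: "Fmono c (- int n - 1) ?m f = ?T {#} + (\<Sum>Q\<in>{Q. Q \<subseteq># A} - {{#}}. ?T Q)" .
  have "?T {#} = (\<Sum>M\<in>msum (int n). ?t {#} M)" by simp
  also have "\<dots> = ?t {#} {#n#} + (\<Sum>M\<in>msum (int n) - {{#n#}}. ?t {#} M)"
    by (rule sum.remove) (use fin_msum n in \<open>auto simp: msum_def\<close>)
  finally have e2: "?T {#} = ?t {#} {#n#} + (\<Sum>M\<in>msum (int n) - {{#n#}}. ?t {#} M)" .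
  have t0: "?t {#} {#n#} = mon (A,P,S,B + {#n#}) (\<lambda>\<tau>. deriv c \<tau> * f \<tau>)" by simp
  have r1: "ge (part ?m + 2) (\<Sum>M\<in>msum (int n) - {{#n#}}. ?t {#} M)"
    by (intro ge_sum bnd) (use msum_n_rest n in auto)
  have r2: "ge (part ?m + 2) (\<Sum>Q\<in>{Q. Q \<subseteq># A} - {{#}}. ?T Q)"
  proof (intro ge_sum bnd)
    fix Q M assume Q: "Q \<in> {Q. Q \<subseteq># A} - {{#}}" and M: "M \<in> msum (int (sum_mset Q) - (- int n - 1) - 1)"
    show "Q \<subseteq># A" using Q by simp
    have "1 \<le> size Q" using Q by (auto simp: Suc_le_eq nonempty_has_size)
    moreover have "M \<noteq> {#}" using M n by (auto simp: msum_def simp del: of_nat_sum_mset)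
    then have "1 \<le> size M" by (auto simp: Suc_le_eq nonempty_has_size)
    ultimately show "2 \<le> size Q + size M" by simp
  qed
  have "LD (part ?m + 1) (A,P,S,B + {#n#}) (\<lambda>\<tau>. deriv c \<tau> * f \<tau>) (?t {#} {#n#})"
    unfolding t0 by (rule LD_mon) (use fm in \<open>auto simp: part_eq\<close>)
  then have "LD (part ?m + 1) (A,P,S,B + {#n#}) (\<lambda>\<tau>. deriv c \<tau> * f \<tau>) (?t {#} {#n#} + (\<Sum>M\<in>msum (int n) - {{#n#}}. ?t {#} M))"
    by (rule LD_add) (rule ge_mono[OF r1], simp)
  then have "LD (part ?m + 1) (A,P,S,B + {#n#}) (\<lambda>\<tau>. deriv c \<tau> * f \<tau>) (?T {#} + (\<Sum>Q\<in>{Q. Q \<subseteq># A} - {{#}}. ?T Q))"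
    unfolding e2 by (rule LD_add) (rule ge_mono[OF r2], simp)
  then show ?thesis unfolding e1 .
qed

lemma LD_FM_b:
  assumes n: "1 \<le> n" and w: "LD p (A,P,S,B) h w"
  shows "LD (p+1) (A,P,S,B + {#n#}) (\<lambda>\<tau>. deriv c \<tau> * h \<tau>) (FM c (- int n - 1) w)"
proof -
  have pm: "part (A,P,S,B) = p" "fmono (A,P,S,B)" using w by (auto simp: LD_def)
  have H: "\<And>m f. fmono m \<Longrightarrow> ge (part m + 1) (Fmono c (- int n - 1) m f)"
    using ge_Fmono[of _ "- int n - 1" c] n by simp
  have L: "\<And>f. LD (p + 1) (A,P,S,B + {#n#}) (\<lambda>\<tau>. deriv c \<tau> * f \<tau>) (Fmono c (- int n - 1) (A,P,S,B) f)"
    using LD_Fmono_b[OF pm(2) n] pm(1) by simp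
  show ?thesis using LinLD[OF H L w] unfolding FM_def by simp
qed

definition amono :: mono where "amono = ({#1#}, {}, {}, {#})"
definition phimono :: mono where "phimono = ({#}, {0}, {}, {#})"
definition psimono :: mono where "psimono = ({#}, {}, {1}, {#})"
definition pp_mono :: mono where "pp_mono = ({#}, {0}, {1}, {#})"

lemma Yf_a: "Yf (Suc 0) amono c k w =
   (\<Sum>i\<le>wt amono + wtmax w + nat \<bar>k\<bar> + 1. aM (- 1 - int i) (FM c (k + int i) w) + FM c (k - 1 - int i) (aM (int i) w))"
  by (simp add: amono_def Let_def emono_def del: sum.atMost_Suc)

lemma Yf_psi: "Yf (Suc 0) psimono c k w =
   (\<Sum>i\<le>wt psimono + wtmax w + nat \<bar>k\<bar> + 1. psiM (- 1 - int i) (FM c (k + int i) w) + FM c (k - 1 - int i) (psiM (int i) w))"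
  by (simp add: psimono_def Let_def emono_def del: sum.atMost_Suc)

lemma Yf_phi: "Yf (Suc 0) phimono c k w =
   (\<Sum>i\<le>wt phimono + wtmax w + nat \<bar>k\<bar> + 1. phiM (- 1 - int i) (FM c (k + int i) w) + FM c (k - 1 - int i) (phiM (int i) w))"
  by (simp add: phimono_def Let_def emono_def del: sum.atMost_Suc)

lemma Yf_pp: "Yf (Suc (Suc 0)) pp_mono c k w =
   (\<Sum>i\<le>wt pp_mono + wtmax w + nat \<bar>k\<bar> + 1. (phiM (- 1 - int i) (Yf (Suc 0) psimono c (k + int i) w)
     + smul (-1) (Yf (Suc 0) psimono c (k - 1 - int i) (phiM (int i) w))))"
  by (simp add: pp_mono_def psimono_def Let_def emono_def del: sum.atMost_Suc)

lemma LD_sum_split: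
  assumes "finite I" "i0 \<in> I" "LD p m h (T i0)" "\<And>i. i \<in> I - {i0} \<Longrightarrow> ge (p+1) (T i)"
  shows "LD p m h (\<Sum>i\<in>I. T i)"
proof -
  have "(\<Sum>i\<in>I. T i) = T i0 + (\<Sum>i\<in>I - {i0}. T i)" using assms(1,2) by (simp add: sum.remove)
  then show ?thesis using LD_add[OF assms(3) ge_sum[of "I - {i0}" "p+1" T]] assms(4) by simp
qed

lemma LD_ge: "LD p m h w \<Longrightarrow> ge p w" by (simp add: LD_def)

lemma LD_Ya:
  assumes n: "1 \<le> n" and w: "LD p (A,P,S,B) h w"
  shows "LD (p-1) (A + {#n#},P,S,B) (\<lambda>\<tau>. c \<tau> * h \<tau>) (Yf (Suc 0) amono c (- int n) w)"
  unfolding Yf_a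
proof (rule LD_sum_split)
  have gw: "ge p w" using LD_ge[OF w] .
  show "finite {..wt amono + wtmax w + nat \<bar>- int n\<bar> + 1}" by simp
  show "n - 1 \<in> {..wt amono + wtmax w + nat \<bar>- int n\<bar> + 1}" by simp
  have a: "aM (- 1 - int (n - 1)) (FM c (- int n + int (n - 1)) w) = aM (- int n) (FM c (-1) w)"
    using n by (simp add: of_nat_diff)
  have "LD (p-1) (A + {#n#},P,S,B) (\<lambda>\<tau>. c \<tau> * h \<tau>) (aM (- int n) (FM c (-1) w))"
    by (rule LD_aM[OF n LD_FM_lead[OF w]])
  moreover have "ge (p - 1 + 1) (FM c (- int n - 1 - int (n - 1)) (aM (int (n - 1)) w))"
    using ge_FM1[OF _ ge_aM[OF gw]] n by simp
  ultimately show "LD (p - 1) (A + {#n#}, P, S, B) (\<lambda>\<tau>. c \<tau> * h \<tau>)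
     (aM (- 1 - int (n - 1)) (FM c (- int n + int (n - 1)) w) + FM c (- int n - 1 - int (n - 1)) (aM (int (n - 1)) w))"
    unfolding a using LD_add by blast
  fix i assume i: "i \<in> {..wt amono + wtmax w + nat \<bar>- int n\<bar> + 1} - {n - 1}"
  then have "- int n + int i \<noteq> -1" using n by auto
  then have "ge (p - 1 + 1) (aM (- 1 - int i) (FM c (- int n + int i) w))"
    using ge_aM[OF ge_FM1[OF _ gw]] by simp
  moreover have "ge (p - 1 + 1) (FM c (- int n - 1 - int i) (aM (int i) w))"
    using ge_FM1[OF _ ge_aM[OF gw]] n by simp
  ultimately show "ge (p - 1 + 1) (aM (- 1 - int i) (FM c (- int n + int i) w) + FM c (- int n - 1 - int i) (aM (int i) w))"
    by (rule ge_add)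
qed

lemma LD_Ypsi:
  assumes s: "s \<notin> S" "1 \<le> s" and w: "LD p (A,P,S,B) h w"
  shows "LD (p-1) (A,P,insert s S,B) (\<lambda>\<tau>. (-1) ^ (card P + card {x\<in>S. s < x}) * (c \<tau> * h \<tau>)) (Yf (Suc 0) psimono c (- int s) w)"
  unfolding Yf_psi
proof (rule LD_sum_split)
  have gw: "ge p w" using LD_ge[OF w] .
  show "finite {..wt psimono + wtmax w + nat \<bar>- int s\<bar> + 1}" by simp
  show "s - 1 \<in> {..wt psimono + wtmax w + nat \<bar>- int s\<bar> + 1}" by simp
  have a: "psiM (- 1 - int (s - 1)) (FM c (- int s + int (s - 1)) w) = psiM (- int s) (FM c (-1) w)"
    using s by (simp add: of_nat_diff)
  have "LD (p-1) (A,P,insert s S,B) (\<lambda>\<tau>. (-1) ^ (card P + card {x\<in>S. s < x}) * (c \<tau> * h \<tau>)) (psiM (- int s) (FM c (-1) w))"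
    by (rule LD_psiM[OF s LD_FM_lead[OF w]])
  moreover have "ge (p - 1 + 1) (FM c (- int s - 1 - int (s - 1)) (psiM (int (s - 1)) w))"
    using ge_FM1[OF _ ge_psiM[OF gw]] s by simp
  ultimately show "LD (p - 1) (A,P,insert s S,B) (\<lambda>\<tau>. (-1) ^ (card P + card {x\<in>S. s < x}) * (c \<tau> * h \<tau>))
     (psiM (- 1 - int (s - 1)) (FM c (- int s + int (s - 1)) w) + FM c (- int s - 1 - int (s - 1)) (psiM (int (s - 1)) w))"
    unfolding a using LD_add by blast
  fix i assume i: "i \<in> {..wt psimono + wtmax w + nat \<bar>- int s\<bar> + 1} - {s - 1}"
  then have "- int s + int i \<noteq> -1" using s by auto
  then have "ge (p - 1 + 1) (psiM (- 1 - int i) (FM c (- int s + int i) w))"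
    using ge_psiM[OF ge_FM1[OF _ gw]] by simp
  moreover have "ge (p - 1 + 1) (FM c (- int s - 1 - int i) (psiM (int i) w))"
    using ge_FM1[OF _ ge_psiM[OF gw]] s by simp
  ultimately show "ge (p - 1 + 1) (psiM (- 1 - int i) (FM c (- int s + int i) w) + FM c (- int s - 1 - int i) (psiM (int i) w))"
    by (rule ge_add)
qed

lemma LD_Yphi:
  assumes q: "q \<notin> P" and w: "LD p (A,P,S,B) h w"
  shows "LD (p+1) (A,insert q P,S,B) (\<lambda>\<tau>. (-1) ^ card {x\<in>P. q < x} * (c \<tau> * h \<tau>)) (Yf (Suc 0) phimono c (- int q - 1) w)"
  unfolding Yf_phi
proof (rule LD_sum_split)
  have gw: "ge p w" using LD_ge[OF w] .
  show "finite {..wt phimono + wtmax w + nat \<bar>- int q - 1\<bar> + 1}" by simp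
  show "q \<in> {..wt phimono + wtmax w + nat \<bar>- int q - 1\<bar> + 1}" by simp
  have a: "phiM (- 1 - int q) (FM c (- int q - 1 + int q) w) = phiM (- int q - 1) (FM c (-1) w)"
  proof -
    have e1: "(- 1 - int q) = (- int q - 1)" by simp
    have e2: "- int q - 1 + int q = (-1::int)" by simp
    show ?thesis by (simp only: e1 e2)
  qed
  have "LD (p+1) (A,insert q P,S,B) (\<lambda>\<tau>. (-1) ^ card {x\<in>P. q < x} * (c \<tau> * h \<tau>)) (phiM (- int q - 1) (FM c (-1) w))"
    by (rule LD_phiM[OF q LD_FM_lead[OF w]])
  moreover have "ge (p + 1 + 1) (FM c (- int q - 1 - 1 - int q) (phiM (int q) w))"
    using ge_FM1[OF _ ge_phiM[OF gw]] by simp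
  ultimately show "LD (p + 1) (A,insert q P,S,B) (\<lambda>\<tau>. (-1) ^ card {x\<in>P. q < x} * (c \<tau> * h \<tau>))
     (phiM (- 1 - int q) (FM c (- int q - 1 + int q) w) + FM c (- int q - 1 - 1 - int q) (phiM (int q) w))"
    unfolding a using LD_add by blast
  fix i assume i: "i \<in> {..wt phimono + wtmax w + nat \<bar>- int q - 1\<bar> + 1} - {q}"
  then have "- int q - 1 + int i \<noteq> -1" by auto
  then have "ge (p + 1 + 1) (phiM (- 1 - int i) (FM c (- int q - 1 + int i) w))"
    using ge_phiM[OF ge_FM1[OF _ gw]] by simp
  moreover have "ge (p + 1 + 1) (FM c (- int q - 1 - 1 - int i) (phiM (int i) w))"
    using ge_FM1[OF _ ge_phiM[OF gw]] by simp
  ultimately show "ge (p + 1 + 1) (phiM (- 1 - int i) (FM c (- int q - 1 + int i) w) + FM c (- int q - 1 - 1 - int i) (phiM (int i) w))"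
    by (rule ge_add)
qed

lemma ge_Ypsi: "ge p w \<Longrightarrow> ge (p - 1) (Yf (Suc 0) psimono c k w)"
  unfolding Yf_psi
  by (intro ge_sum ge_add ge_psiM ge_FM) (auto intro: ge_psiM ge_FM ge_mono)

lemma ge_Ypp: "ge p w \<Longrightarrow> ge p (Yf (Suc (Suc 0)) pp_mono c k w)"
  unfolding Yf_pp
proof (intro ge_sum ge_add ge_smul)
  fix i assume "ge p w"
  show "ge p (phiM (- 1 - int i) (Yf (Suc 0) psimono c (k + int i) w))"
    using ge_phiM[OF ge_Ypsi[OF \<open>ge p w\<close>]] by simp
  show "ge p (Yf (Suc 0) psimono c (k - 1 - int i) (phiM (int i) w))"
    using ge_Ypsi[OF ge_phiM[OF \<open>ge p w\<close>]] by simp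
qed

definition sl :: "real4 \<Rightarrow> bool" where
  "sl g = (case g of (\<alpha>,\<beta>,\<gamma>,\<delta>) \<Rightarrow> \<alpha> * \<delta> - \<beta> * \<gamma> = 1)"

lemma ii_HH: "\<i> \<in> HH" by (simp add: HH_def)

lemma jf_nz:
  assumes "sl g" "\<tau> \<in> HH" shows "jf g \<tau> \<noteq> 0"
proof (cases g)
  case (fields \<alpha> \<beta> \<gamma> \<delta>)
  show ?thesis
  proof
    assume "jf g \<tau> = 0"
    then have "of_real \<gamma> * \<tau> + of_real \<delta> = 0" by (simp add: jf_def fields)
    then have "Im (of_real \<gamma> * \<tau> + of_real \<delta>) = 0" "Re (of_real \<gamma> * \<tau> + of_real \<delta>) = 0" by simp_all
    then have "\<gamma> * Im \<tau> = 0" "\<gamma> * Re \<tau> + \<delta> = 0" by simp_all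
    moreover have "Im \<tau> > 0" using assms(2) by (simp add: HH_def)
    ultimately have "\<gamma> = 0" "\<delta> = 0" by auto
    then show False using assms(1) by (simp add: sl_def fields)
  qed
qed

lemma Im_mob:
  assumes "sl g" shows "Im (mob g \<tau>) = Im \<tau> / (cmod (jf g \<tau>))^2"
proof (cases g)
  case (fields \<alpha> \<beta> \<gamma> \<delta>)
  have d: "\<alpha> * \<delta> - \<beta> * \<gamma> = 1" using assms by (simp add: sl_def fields)
  have "Im (mob g \<tau>) = (Im (of_real \<alpha> * \<tau> + of_real \<beta>) * Re (jf g \<tau>) - Re (of_real \<alpha> * \<tau> + of_real \<beta>) * Im (jf g \<tau>)) / (cmod (jf g \<tau>))^2"
    by (simp add: mob_def jf_def fields Im_divide cmod_power2)
  also have "Im (of_real \<alpha> * \<tau> + of_real \<beta>) * Re (jf g \<tau>) - Re (of_real \<alpha> * \<tau> + of_real \<beta>) * Im (jf g \<tau>) = Im \<tau> * (\<alpha> * \<delta> - \<beta> * \<gamma>)"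
    by (simp add: jf_def fields algebra_simps)
  finally show ?thesis using d by simp
qed

lemma mob_HH: "sl g \<Longrightarrow> \<tau> \<in> HH \<Longrightarrow> mob g \<tau> \<in> HH"
  using Im_mob[of g \<tau>] jf_nz[of g \<tau>] by (simp add: HH_def)

lemma deriv_mob:
  assumes "sl g" "\<tau> \<in> HH" shows "deriv (mob g) \<tau> = 1 / (jf g \<tau>)^2"
proof (cases g)
  case (fields \<alpha> \<beta> \<gamma> \<delta>)
  have d: "\<alpha> * \<delta> - \<beta> * \<gamma> = 1" using assms by (simp add: sl_def fields)
  have nz: "of_real \<gamma> * \<tau> + of_real \<delta> \<noteq> 0" using jf_nz[OF assms] by (simp add: jf_def fields)
  have "((\<lambda>z. (of_real \<alpha> * z + of_real \<beta>) / (of_real \<gamma> * z + of_real \<delta>)) has_field_derivative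
     ((of_real \<alpha> * (of_real \<gamma> * \<tau> + of_real \<delta>) - (of_real \<alpha> * \<tau> + of_real \<beta>) * of_real \<gamma>) / (of_real \<gamma> * \<tau> + of_real \<delta>)^2)) (at \<tau>)"
    using nz by (auto intro!: derivative_eq_intros simp: power2_eq_square)
  moreover have "(of_real \<alpha> * (of_real \<gamma> * \<tau> + of_real \<delta>) - (of_real \<alpha> * \<tau> + of_real \<beta>) * of_real \<gamma>) = (of_real (\<alpha> * \<delta> - \<beta> * \<gamma>) :: complex)"
    by (simp add: algebra_simps)
  moreover have "mob g = (\<lambda>z. (of_real \<alpha> * z + of_real \<beta>) / (of_real \<gamma> * z + of_real \<delta>))"
    by (rule ext) (simp add: mob_def fields)
  ultimately have "(mob g has_field_derivative 1 / (jf g \<tau>)^2) (at \<tau>)"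
    using d by (simp add: jf_def fields)
  then show ?thesis by (rule DERIV_imp_deriv)
qed

lemma nz_j2: assumes "sl g" shows "nz (\<lambda>\<tau>. (jf g \<tau>)^2)"
proof -
  have "jf g \<i> \<noteq> 0" by (rule jf_nz[OF assms ii_HH])
  then show ?thesis unfolding nz_def using ii_HH by auto
qed

lemma LD_YMa:
  assumes g: "sl g" and n: "1 \<le> n" and w: "LD p (A,P,S,B) h w"
  shows "LD (p-1) (A + {#n#},P,S,B) (\<lambda>\<tau>. (jf g \<tau>)^2 * h \<tau>) (YM (piA g) (- int n) w)"
  unfolding YM_def
proof (rule LD_sum_split)
  have neq: "({#}, {0::nat}, {1::nat}, {#}) \<noteq> amono" by (simp add: amono_def)
  have va: "piA g amono = (\<lambda>\<tau>. (jf g \<tau>)^2)" using neq by (simp add: piA_def mon_def amono_def zero_fun_def)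
  have ss: "supp (piA g) \<subseteq> {amono, pp_mono}"
    using supp_add[of "mon ({#1#}, {}, {}, {#}) (\<lambda>\<tau>. (jf g \<tau>)^2)" "mon ({#}, {0}, {1}, {#}) (\<lambda>\<tau>. 2 * of_real (fst (snd (snd g))) * jf g \<tau>)"]
      supp_mon[of "({#1#}, {}, {}, {#})"] supp_mon[of "({#}, {0}, {1}, {#})"]
    unfolding piA_def amono_def pp_mono_def by blast
  show "finite (supp (piA g))" using ss finite_subset by blast
  show "amono \<in> supp (piA g)" using va nz_j2[OF g] by (simp add: supp_def)
  have "msize amono = Suc 0" by (simp add: msize_def amono_def)
  then show "LD (p - 1) (A + {#n#}, P, S, B) (\<lambda>\<tau>. (jf g \<tau>)^2 * h \<tau>)
     (Yf (msize amono) amono (piA g amono) (- int n) w)"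
    using LD_Ya[OF n w, of "\<lambda>\<tau>. (jf g \<tau>)^2"] va by (simp del: Yf.simps)
  fix m assume "m \<in> supp (piA g) - {amono}"
  then have m: "m = pp_mono" using ss by blast
  have "msize pp_mono = Suc (Suc 0)" by (simp add: msize_def pp_mono_def)
  then show "ge (p - 1 + 1) (Yf (msize m) m (piA g m) (- int n) w)"
    using ge_Ypp[OF LD_ge[OF w]] m by (simp del: Yf.simps)
qed

lemma LD_YMb:
  assumes g: "sl g" and n: "1 \<le> n" and w: "LD p (A,P,S,B) h w"
  shows "LD (p+1) (A,P,S,B + {#n#}) (\<lambda>\<tau>. h \<tau> / (jf g \<tau>)^2) (YM (piB g) (- int n - 1) w)"
proof -
  have "supp (piB g) \<subseteq> {emono}" using supp_mon unfolding piB_def by blast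
  moreover have "Im (mob g \<i>) > 0" using mob_HH[OF g ii_HH] by (simp add: HH_def)
  then have "mob g \<i> \<noteq> 0" by auto
  then have "nz (mob g)" using ii_HH unfolding nz_def by auto
  then have "emono \<in> supp (piB g)" by (simp add: supp_def piB_def mon_def)
  ultimately have ss: "supp (piB g) = {emono}" by blast
  have "YM (piB g) (- int n - 1) w = FM (mob g) (- int n - 1) w"
    unfolding YM_def ss by (simp add: msize_def emono_def piB_def mon_def)
  moreover have "LD (p+1) (A,P,S,B + {#n#}) (\<lambda>\<tau>. deriv (mob g) \<tau> * h \<tau>) (FM (mob g) (- int n - 1) w)"
    by (rule LD_FM_b[OF n w])
  ultimately show ?thesis by (rule_tac LD_cong) (auto simp: deriv_mob[OF g])
qed

lemma LD_YMphi:
  assumes g: "sl g" and q: "q \<notin> P" and w: "LD p (A,P,S,B) h w"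
  shows "LD (p+1) (A,insert q P,S,B) (\<lambda>\<tau>. (-1) ^ card {x\<in>P. q < x} * (1 / (jf g \<tau>)^2 * h \<tau>)) (YM (piPhi g) (- int q - 1) w)"
proof -
  have "supp (piPhi g) \<subseteq> {phimono}" using supp_mon unfolding piPhi_def phimono_def by blast
  moreover have "jf g \<i> \<noteq> 0" by (rule jf_nz[OF g ii_HH])
  then have "nz (\<lambda>\<tau>. 1 / (jf g \<tau>)^2)" using ii_HH unfolding nz_def by auto
  then have "phimono \<in> supp (piPhi g)" by (simp add: supp_def piPhi_def mon_def phimono_def)
  ultimately have ss: "supp (piPhi g) = {phimono}" by blast
  have "YM (piPhi g) (- int q - 1) w = Yf (Suc 0) phimono (\<lambda>\<tau>. 1 / (jf g \<tau>)^2) (- int q - 1) w"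
    unfolding YM_def ss by (simp add: msize_def phimono_def piPhi_def mon_def del: Yf.simps)
  then show ?thesis using LD_Yphi[OF q w, of "\<lambda>\<tau>. 1 / (jf g \<tau>)^2"] by (simp only:)
qed

lemma LD_YMpsi:
  assumes g: "sl g" and s: "s \<notin> S" "1 \<le> s" and w: "LD p (A,P,S,B) h w"
  shows "LD (p-1) (A,P,insert s S,B) (\<lambda>\<tau>. (-1) ^ (card P + card {x\<in>S. s < x}) * ((jf g \<tau>)^2 * h \<tau>)) (YM (piPsi g) (- int s) w)"
proof -
  have "supp (piPsi g) \<subseteq> {psimono}" using supp_mon unfolding piPsi_def psimono_def by blast
  moreover have "psimono \<in> supp (piPsi g)" using nz_j2[OF g] by (simp add: supp_def piPsi_def mon_def psimono_def)
  ultimately have ss: "supp (piPsi g) = {psimono}" by blast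
  have "YM (piPsi g) (- int s) w = Yf (Suc 0) psimono (\<lambda>\<tau>. (jf g \<tau>)^2) (- int s) w"
    unfolding YM_def ss by (simp add: msize_def psimono_def piPsi_def mon_def del: Yf.simps)
  then show ?thesis using LD_Ypsi[OF s w, of "\<lambda>\<tau>. (jf g \<tau>)^2"] by (simp only:)
qed

lemma powi_plus2: "(z::complex) \<noteq> 0 \<Longrightarrow> z powi (a + 2) = z powi a * z^2"
  by (simp add: power_int_add)

lemma max_card0: "finite P \<Longrightarrow> P \<noteq> {} \<Longrightarrow> card {x\<in>P - {Max P}. Max P < (x::nat)} = 0"
  by (auto simp: card_eq_0_iff)

lemma valid_eq: "valid_mono (A,P,S,B) = (finite P \<and> finite S \<and> 0 \<notin># A \<and> 0 \<notin># B \<and> 0 \<notin> S)"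
  by (simp add: valid_mono_def)

lemma msize_eq: "msize (A,P,S,B) = size A + card P + card S + size B" by (simp add: msize_def)

lemma LD_cong2: "LD p m h w \<Longrightarrow> p = p' \<Longrightarrow> m = m' \<Longrightarrow> w = w' \<Longrightarrow> (\<And>\<tau>. \<tau> \<in> HH \<Longrightarrow> h \<tau> = h' \<tau>) \<Longrightarrow> LD p' m' h' w'"
  by (auto simp: LD_def)

lemma LD_pif:
  assumes g: "sl g"
  shows "valid_mono m \<Longrightarrow> msize m = r \<Longrightarrow>
    LD (part m) m (\<lambda>\<tau>. (jf g \<tau>) powi (- 2 * part m) * f (mob g \<tau>)) (pif r g m f)"
proof (induction r arbitrary: m)
  case 0
  obtain A P S B where m: "m = (A,P,S,B)" by (cases m)
  have "A = {#}" "P = {}" "S = {}" "B = {#}" using 0 by (auto simp: m valid_eq msize_eq)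
  then have me: "m = emono" by (simp add: m emono_def)
  have pe: "part emono = 0" by (simp add: emono_def part_eq)
  show ?case unfolding me pe by (simp add: emono_def) (rule LD_mon, auto simp: part_eq)
next
  case (Suc r)
  obtain A P S B where m: "m = (A,P,S,B)" by (cases m)
  have v: "finite P" "finite S" "0 \<notin># A" "0 \<notin># B" "0 \<notin> S" using Suc.prems by (auto simp: m valid_eq)
  have jnz: "\<And>\<tau>. \<tau> \<in> HH \<Longrightarrow> jf g \<tau> \<noteq> 0" using jf_nz[OF g] by blast
  show ?case
  proof (cases "A \<noteq> {#}")
    case True
    define n where "n = Max (set_mset A)"
    have nA: "n \<in># A" using True by (simp add: n_def)
    then have n1: "1 \<le> n" using v(3) by (cases n) auto
    define m' where "m' = (A - {#n#}, P, S, B)"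
    have vm': "valid_mono m'" using v by (auto simp: m'_def valid_eq dest: in_diffD)
    have "0 < size A" using nA nonempty_has_size by force
    then have sm': "msize m' = r" using Suc.prems nA by (simp add: m m'_def msize_eq size_Diff_singleton)
    have IH: "LD (part m') m' (\<lambda>\<tau>. (jf g \<tau>) powi (- 2 * part m') * f (mob g \<tau>)) (pif r g m' f)"
      using Suc.IH[OF vm' sm'] .
    have eA: "A - {#n#} + {#n#} = A" using nA by simp
    have pp: "part m' = part m + 1" using nA \<open>0 < size A\<close> by (simp add: m m'_def part_eq size_Diff_singleton of_nat_diff Suc_le_eq nonempty_has_size)
    have E: "pif (Suc r) g m f = YM (piA g) (- int n) (pif r g m' f)"
      using True by (simp add: m m'_def n_def Let_def)
    have L: "LD (part m' - 1) (A - {#n#} + {#n#},P,S,B) (\<lambda>\<tau>. (jf g \<tau>)^2 * ((jf g \<tau>) powi (- 2 * part m') * f (mob g \<tau>))) (YM (piA g) (- int n) (pif r g m' f))"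
      using LD_YMa[OF g n1, of "part m'" "A - {#n#}" P S B] IH by (simp add: m'_def)
    show ?thesis unfolding E
    proof (rule LD_cong2[OF L])
      fix \<tau> :: complex assume "\<tau> \<in> HH"
      then have "jf g \<tau> \<noteq> 0" by (rule jnz)
      then show "(jf g \<tau>)^2 * ((jf g \<tau>) powi (- 2 * part m') * f (mob g \<tau>)) = (jf g \<tau>) powi (- 2 * part m) * f (mob g \<tau>)"
        using powi_plus2[of "jf g \<tau>" "- 2 * (part m + 1)"] by (simp add: algebra_simps pp)
    qed (simp_all add: pp m insert_DiffM nA)
  next
    case noA: False
    show ?thesis
    proof (cases "B \<noteq> {#}")
      case True
      define n where "n = Max (set_mset B)"
      have nB: "n \<in># B" using True by (simp add: n_def)
      then have n1: "1 \<le> n" using v(4) by (cases n) auto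
      define m' where "m' = (A, P, S, B - {#n#})"
      have vm': "valid_mono m'" using v by (auto simp: m'_def valid_eq dest: in_diffD)
      have "0 < size B" using nB nonempty_has_size by force
      then have sm': "msize m' = r" using Suc.prems nB by (simp add: m m'_def msize_eq size_Diff_singleton)
      have IH: "LD (part m') m' (\<lambda>\<tau>. (jf g \<tau>) powi (- 2 * part m') * f (mob g \<tau>)) (pif r g m' f)"
        using Suc.IH[OF vm' sm'] .
      have eB: "B - {#n#} + {#n#} = B" using nB by simp
      have pp: "part m' = part m - 1" using nB \<open>0 < size B\<close> by (simp add: m m'_def part_eq size_Diff_singleton of_nat_diff Suc_le_eq nonempty_has_size)
      have E: "pif (Suc r) g m f = YM (piB g) (- int n - 1) (pif r g m' f)"
        using True noA by (simp add: m m'_def n_def Let_def)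
      have L: "LD (part m' + 1) (A,P,S,B - {#n#} + {#n#}) (\<lambda>\<tau>. ((jf g \<tau>) powi (- 2 * part m') * f (mob g \<tau>)) / (jf g \<tau>)^2) (YM (piB g) (- int n - 1) (pif r g m' f))"
        using LD_YMb[OF g n1, of "part m'" A P S "B - {#n#}"] IH by (simp add: m'_def)
      show ?thesis unfolding E
      proof (rule LD_cong2[OF L])
        fix \<tau> :: complex assume "\<tau> \<in> HH"
        then have "jf g \<tau> \<noteq> 0" by (rule jnz)
        then show "(jf g \<tau>) powi (- 2 * part m') * f (mob g \<tau>) / (jf g \<tau>)^2 = (jf g \<tau>) powi (- 2 * part m) * f (mob g \<tau>)"
          using powi_plus2[of "jf g \<tau>" "- 2 * part m"] by (simp add: algebra_simps pp)
      qed (simp_all add: pp m insert_DiffM nB)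
    next
      case noB: False
      show ?thesis
      proof (cases "P \<noteq> {}")
        case True
        define q where "q = Max P"
        have qP: "q \<in> P" using True v(1) by (simp add: q_def)
        define m' where "m' = (A, P - {q}, S, B)"
        have vm': "valid_mono m'" using v by (auto simp: m'_def valid_eq)
        have "0 < card P" using qP v(1) card_gt_0_iff by blast
        then have sm': "msize m' = r" using Suc.prems qP v(1) by (simp add: m m'_def msize_eq)
        have IH: "LD (part m') m' (\<lambda>\<tau>. (jf g \<tau>) powi (- 2 * part m') * f (mob g \<tau>)) (pif r g m' f)"
          using Suc.IH[OF vm' sm'] .
        have eP: "insert q (P - {q}) = P" using qP by auto
        have pp: "part m' = part m - 1" using qP v(1) \<open>0 < card P\<close> by (simp add: m m'_def part_eq of_nat_diff Suc_le_eq)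
        have c0: "card {x \<in> P - {q}. q < x} = 0" using max_card0[OF v(1) True] by (simp add: q_def)
        have E: "pif (Suc r) g m f = YM (piPhi g) (- int q - 1) (pif r g m' f)"
          using True noA noB by (simp add: m m'_def q_def Let_def)
        have L: "LD (part m' + 1) (A,insert q (P - {q}),S,B) (\<lambda>\<tau>. (-1) ^ card {x\<in>P - {q}. q < x} * (1 / (jf g \<tau>)^2 * ((jf g \<tau>) powi (- 2 * part m') * f (mob g \<tau>)))) (YM (piPhi g) (- int q - 1) (pif r g m' f))"
          using LD_YMphi[OF g, of q "P - {q}" "part m'" A S B] IH by (simp add: m'_def)
        show ?thesis unfolding E
        proof (rule LD_cong2[OF L])
          fix \<tau> :: complex assume "\<tau> \<in> HH"
          then have "jf g \<tau> \<noteq> 0" by (rule jnz)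
          then show "(-1) ^ card {x\<in>P - {q}. q < x} * (1 / (jf g \<tau>)^2 * ((jf g \<tau>) powi (- 2 * part m') * f (mob g \<tau>))) = (jf g \<tau>) powi (- 2 * part m) * f (mob g \<tau>)"
            using powi_plus2[of "jf g \<tau>" "- 2 * part m"] by (simp add: algebra_simps pp c0[simplified])
        qed (simp_all add: pp m eP qP insert_absorb)
      next
        case noP: False
        show ?thesis
        proof (cases "S \<noteq> {}")
          case True
          define s where "s = Max S"
          have sS: "s \<in> S" using True v(2) by (simp add: s_def)
          then have s1: "1 \<le> s" using v(5) by (cases s) auto
          define m' where "m' = (A, P, S - {s}, B)"
          have vm': "valid_mono m'" using v by (auto simp: m'_def valid_eq)
          have "0 < card S" using sS v(2) card_gt_0_iff by blast
          then have sm': "msize m' = r" using Suc.prems sS v(2) by (simp add: m m'_def msize_eq)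
          have IH: "LD (part m') m' (\<lambda>\<tau>. (jf g \<tau>) powi (- 2 * part m') * f (mob g \<tau>)) (pif r g m' f)"
            using Suc.IH[OF vm' sm'] .
          have eS: "insert s (S - {s}) = S" using sS by auto
          have pp: "part m' = part m + 1" using sS v(2) \<open>0 < card S\<close> by (simp add: m m'_def part_eq of_nat_diff Suc_le_eq)
          have c0: "card {x \<in> S - {s}. s < x} = 0" using max_card0[OF v(2) True] by (simp add: s_def)
          have E: "pif (Suc r) g m f = YM (piPsi g) (- int s) (pif r g m' f)"
            using True noA noB noP by (simp add: m m'_def s_def Let_def)
          have L: "LD (part m' - 1) (A,P,insert s (S - {s}),B) (\<lambda>\<tau>. (-1) ^ (card P + card {x\<in>S - {s}. s < x}) * ((jf g \<tau>)^2 * ((jf g \<tau>) powi (- 2 * part m') * f (mob g \<tau>)))) (YM (piPsi g) (- int s) (pif r g m' f))"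
            using LD_YMpsi[OF g _ s1, of "S - {s}" "part m'" A P B] IH by (simp add: m'_def)
          show ?thesis unfolding E
          proof (rule LD_cong2[OF L])
            fix \<tau> :: complex assume "\<tau> \<in> HH"
            then have "jf g \<tau> \<noteq> 0" by (rule jnz)
            then show "(-1) ^ (card P + card {x\<in>S - {s}. s < x}) * ((jf g \<tau>)^2 * ((jf g \<tau>) powi (- 2 * part m') * f (mob g \<tau>))) = (jf g \<tau>) powi (- 2 * part m) * f (mob g \<tau>)"
              using powi_plus2[of "jf g \<tau>" "- 2 * (part m + 1)"] noP by (simp add: algebra_simps pp c0[simplified])
          qed (simp_all add: pp m eS sS insert_absorb)
        next
          case False
          then have "msize m = 0" using noA noB noP by (simp add: m msize_eq)
          then show ?thesis using Suc.prems by simp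
        qed
      qed
    qed
  qed
qed

lemma piact_lead:
  assumes g: "sl g" and v: "v \<in> W n0 k l" and m0: "m0 \<in> Iset n0 k l" and t: "\<tau> \<in> HH"
  shows "piact g v m0 \<tau> = (jf g \<tau>) powi (- 2 * n0) * v m0 (mob g \<tau>)"
proof -
  have fin: "finite (supp v)" and sv: "\<And>m. m \<in> supp v \<Longrightarrow> valid_mono m \<and> n0 \<le> part m"
    using v by (auto simp: W_def)
  have pm0: "part m0 = n0" using m0 by (simp add: Iset_def)
  let ?T = "\<lambda>m'. pif (msize m') g m' (v m') m0 \<tau>"
  have LDm: "LD (part m') m' (\<lambda>\<tau>. (jf g \<tau>) powi (- 2 * part m') * v m' (mob g \<tau>)) (pif (msize m') g m' (v m'))"
    if "m' \<in> supp v" for m'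
    using LD_pif[OF g] sv[OF that] by blast
  have z: "?T m' = 0" if "m' \<in> supp v - {m0}" for m'
  proof -
    have L: "LD (part m') m' (\<lambda>\<tau>. (jf g \<tau>) powi (- 2 * part m') * v m' (mob g \<tau>)) (pif (msize m') g m' (v m'))"
      using LDm that by blast
    have "n0 \<le> part m'" using sv that by blast
    then have "m0 \<notin> supp (pif (msize m') g m' (v m'))" using L that pm0 by (auto simp: LD_def)
    then show ?thesis using not_supp t by blast
  qed
  have e: "piact g v m0 \<tau> = (\<Sum>m'\<in>supp v. ?T m')"
    unfolding piact_def lin_def sum_app ..
  show ?thesis
  proof (cases "m0 \<in> supp v")
    case True
    have "(\<Sum>m'\<in>supp v. ?T m') = ?T m0 + (\<Sum>m'\<in>supp v - {m0}. ?T m')"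
      using fin True by (simp add: sum.remove)
    also have "(\<Sum>m'\<in>supp v - {m0}. ?T m') = 0" using z by simp
    also have "?T m0 = (jf g \<tau>) powi (- 2 * n0) * v m0 (mob g \<tau>)"
      using LDm[OF True] t pm0 by (simp add: LD_def)
    finally show ?thesis using e by simp
  next
    case False
    then have "(\<Sum>m'\<in>supp v. ?T m') = 0" using z by (intro sum.neutral) blast
    moreover have "v m0 (mob g \<tau>) = 0" using not_supp[OF False mob_HH[OF g t]] .
    ultimately show ?thesis using e by simp
  qed
qed

lemma sl_rm: "g \<in> SL2Z \<Longrightarrow> sl (rm g)"
proof (cases g)
  case (fields a b c d)
  assume "g \<in> SL2Z"
  then have "a * d - b * c = 1" by (simp add: SL2Z_def fields)
  then have "real_of_int (a * d - b * c) = 1" by simp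
  then show ?thesis by (simp add: sl_def rm_def fields)
qed

lemma hol_cusp_cong:
  assumes "\<And>\<tau>. \<tau> \<in> HH \<Longrightarrow> h \<tau> = h' \<tau>" "hol_cusp h" shows "hol_cusp h'"
proof -
  have sh: "\<tau> + of_nat N \<in> HH" if "\<tau> \<in> HH" for \<tau> N using that by (simp add: HH_def)
  from assms(2) obtain N c where N: "N > 0" "\<forall>\<tau>\<in>HH. h (\<tau> + of_nat N) = h \<tau>"
    "\<forall>\<tau>\<in>HH. (\<lambda>m. c m * exp (2 * of_real pi * \<i> * of_nat m * \<tau> / of_nat N)) sums h \<tau>"
    unfolding hol_cusp_def by blast
  have "\<forall>\<tau>\<in>HH. h' (\<tau> + of_nat N) = h' \<tau>" using N(2) assms(1) sh by metis
  moreover have "\<forall>\<tau>\<in>HH. (\<lambda>m. c m * exp (2 * of_real pi * \<i> * of_nat m * \<tau> / of_nat N)) sums h' \<tau>"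
    using N(3) assms(1) by metis
  ultimately show ?thesis unfolding hol_cusp_def using N(1) by blast
qed

lemma fin_bounded_msets: "finite {A :: nat multiset. 0 \<notin># A \<and> sum_mset A \<le> k}"
proof -
  have "{A :: nat multiset. 0 \<notin># A \<and> sum_mset A \<le> k} \<subseteq> (\<Union>s\<in>{0..k}. msum (int s))"
    by (auto simp: msum_def)
  moreover have "finite (\<Union>s\<in>{0..k}. msum (int s))" using fin_msum by blast
  ultimately show ?thesis by (rule finite_subset)
qed

lemma fin_Iset: "finite (Iset n0 k l)"
proof -
  let ?X = "{A :: nat multiset. 0 \<notin># A \<and> sum_mset A \<le> k}"
  have "Iset n0 k l \<subseteq> ?X \<times> Pow {0..k} \<times> Pow {0..k} \<times> ?X"
  proof
    fix m assume "m \<in> Iset n0 k l"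
    moreover obtain A P S B where m: "m = (A,P,S,B)" by (cases m)
    ultimately have v: "finite P" "finite S" "0 \<notin># A" "0 \<notin># B" and w: "sum_mset A + \<Sum>P + \<Sum>S + sum_mset B = k"
      by (auto simp: Iset_def valid_eq wt_def)
    have "P \<subseteq> {0..k}" using member_le_sum[of _ P id] v w by fastforce
    moreover have "S \<subseteq> {0..k}" using member_le_sum[of _ S id] v w by fastforce
    ultimately show "m \<in> ?X \<times> Pow {0..k} \<times> Pow {0..k} \<times> ?X" using v w m by auto
  qed
  moreover have "finite (?X \<times> Pow {0..k} \<times> Pow {0..k} \<times> ?X)"
    using fin_bounded_msets[of k] by (intro finite_cartesian_product) auto
  ultimately show ?thesis by (rule finite_subset)
qed

theorem lemma3p4:
  fixes \<Gamma> :: "int4 set" and n0 :: int and k :: nat and l :: int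
  assumes "congruence_subgroup \<Gamma>"
  shows "finite (Iset n0 k l)
    \<and> (\<forall>v\<in>Wfix0 \<Gamma> n0 k l. \<forall>m\<in>Iset n0 k l. modular_form (2 * n0) \<Gamma> (v m))
    \<and> (\<forall>v\<in>Wfix0 \<Gamma> n0 k l.
         (\<forall>m\<in>Iset n0 k l. \<forall>\<tau>\<in>HH. v m \<tau> = 0) \<longleftrightarrow> v \<in> Wfix0 \<Gamma> (n0 + 1) k l)"
proof (intro conjI ballI)
  show "finite (Iset n0 k l)" by (rule fin_Iset)
next
  have GS: "\<Gamma> \<subseteq> SL2Z" using assms by (simp add: congruence_subgroup_def)
  fix v m assume v: "v \<in> Wfix0 \<Gamma> n0 k l" and m: "m \<in> Iset n0 k l"
  have vW: "v \<in> W n0 k l" using v by (simp add: Wfix0_def)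
  show "modular_form (2 * n0) \<Gamma> (v m)" unfolding modular_form_def
  proof (intro conjI ballI)
    obtain A P S B where "m = (A,P,S,B)" by (cases m)
    then show "v m holomorphic_on HH" using vW by (simp add: W_def)
  next
    fix g \<tau> assume g: "g \<in> \<Gamma>" and t: "\<tau> \<in> HH"
    have slg: "sl (rm g)" using sl_rm GS g by blast
    have jn: "jf (rm g) \<tau> \<noteq> 0" using jf_nz[OF slg t] .
    have "\<forall>g\<in>\<Gamma>. \<forall>m. \<forall>\<tau>\<in>HH. piact (rm g) v m \<tau> = v m \<tau>" using v unfolding Wfix0_def by blast
    then have "v m \<tau> = piact (rm g) v m \<tau>" using g t by metis
    also have "\<dots> = (jf (rm g) \<tau>) powi (- 2 * n0) * v m (mob (rm g) \<tau>)"
      by (rule piact_lead[OF slg vW m t])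
    finally have "(jf (rm g) \<tau>) powi (2 * n0) * v m \<tau> = (jf (rm g) \<tau>) powi (2 * n0) * (jf (rm g) \<tau>) powi (- 2 * n0) * v m (mob (rm g) \<tau>)"
      by simp
    also have "(jf (rm g) \<tau>) powi (2 * n0) * (jf (rm g) \<tau>) powi (- 2 * n0) = 1"
      using jn by (simp add: power_int_minus field_simps)
    finally show "v m (mob (rm g) \<tau>) = (jf (rm g) \<tau>) powi (2 * n0) * v m \<tau>" by simp
  next
    fix \<rho> assume r: "\<rho> \<in> SL2Z"
    have slr: "sl (rm \<rho>)" using sl_rm r by blast
    have "hol_cusp (piact (rm \<rho>) v m)" using v r unfolding Wfix0_def by blast
    then show "hol_cusp (\<lambda>\<tau>. (jf (rm \<rho>) \<tau>) powi (- (2 * n0)) * v m (mob (rm \<rho>) \<tau>))"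
      by (rule hol_cusp_cong[rotated]) (simp add: piact_lead[OF slr vW m])
  qed
next
  fix v assume v: "v \<in> Wfix0 \<Gamma> n0 k l"
  show "(\<forall>m\<in>Iset n0 k l. \<forall>\<tau>\<in>HH. v m \<tau> = 0) \<longleftrightarrow> v \<in> Wfix0 \<Gamma> (n0 + 1) k l"
  proof
    assume z: "\<forall>m\<in>Iset n0 k l. \<forall>\<tau>\<in>HH. v m \<tau> = 0"
    have "n0 + 1 \<le> part m" if "m \<in> supp v" for m
    proof (rule ccontr)
      assume "\<not> n0 + 1 \<le> part m"
      moreover have "valid_mono m \<and> n0 \<le> part m \<and> wt m = k \<and> charge m = l" using v that by (auto simp: Wfix0_def W_def)
      ultimately have "m \<in> Iset n0 k l" by (auto simp: Iset_def)
      then show False using z that by (auto simp: supp_def nz_def)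
    qed
    then show "v \<in> Wfix0 \<Gamma> (n0 + 1) k l" using v by (auto simp: Wfix0_def W_def)
  next
    assume v1: "v \<in> Wfix0 \<Gamma> (n0 + 1) k l"
    show "\<forall>m\<in>Iset n0 k l. \<forall>\<tau>\<in>HH. v m \<tau> = 0"
    proof (intro ballI)
      fix m \<tau> assume m: "m \<in> Iset n0 k l" and t: "\<tau> \<in> HH"
      have "m \<notin> supp v" using v1 m by (auto simp: Wfix0_def W_def Iset_def)
      then show "v m \<tau> = 0" using not_supp t by blast
    qed
  qed
qed

end
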